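(* Let $p$ be an odd prime, $q\geq1$, and let $L=L(x,dx)$ be the free differential graded Lie algebra over $\mathbb{Z}/p$ on generators $x$ of degree $q+1$ and $y=dx$ of degree $q$. Suppose $L=H\oplus K$ where $K$ is a differential submodule (acyclic) with a basis $\{x_\alpha,y_\alpha,z_\beta,w_\beta\}_{\alpha\in\mathscr I,\beta\in\mathscr J}$ of homogeneous elements with $d x_\alpha=y_\alpha$, $\deg x_\alpha$ even, $dz_\beta=w_\beta$, $\deg z_\beta$ odd. Let $\sigma\subset L$ be the subspace spanned by $\{\sigma_k(x_\alpha):\alpha\in\mathscr I,k\geq1\}$ and $\sigma_N$ its degree-$N$ part. Then for every positive integer $N$, $$\dim_{\mathbb{Z}/p}\sigma_N\leq c_1\,N\,\varphi^{N/p},\qquad c_1=2(q+2)\varphi^{2/p},$$ where $\varphi$ is the unique positive real root of $z^{q+1}-z-1$.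
   Context: For an even-degree element $u$ of a differential graded Lie algebra over $\mathbb{Z}/p$ ($p$ odd), with $\mathrm{ad}(u)(v)=[u,v]$, define $$\tau_k(u)=\mathrm{ad}^{p^k-1}(u)(du),\qquad \sigma_k(u)=\frac12\sum_{j=1}^{p^k-1}\frac1p\binom{p^k}{j}\big[\mathrm{ad}^{j-1}(u)(du),\ \mathrm{ad}^{p^k-1-j}(u)(du)\big].$$ Note $\deg\sigma_k(u)=p^k\deg u-2$. *)

theory Defs
  imports Complex_Main "HOL-Library.Function_Algebras" "HOL-Library.Cardinality" "HOL-Computational_Algebra.Primes"
begin

text \<open>The tensor algebra T(x,y) over a coefficient field: elements are functions from
words to coefficients. The letter True stands for the generator x (degree q+1),
the letter False for the generator y = dx (degree q).\<close>

type_synonym 'k tens = "bool list \<Rightarrow> 'k"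

definition ldeg :: "nat \<Rightarrow> bool \<Rightarrow> nat" where
  "ldeg q b = (if b then q + 1 else q)"

definition wdeg :: "nat \<Rightarrow> bool list \<Rightarrow> nat" where
  "wdeg q w = sum_list (map (ldeg q) w)"

definition homog :: "nat \<Rightarrow> nat \<Rightarrow> 'k::zero tens \<Rightarrow> bool" where
  "homog q n a \<longleftrightarrow> (\<forall>w. a w \<noteq> 0 \<longrightarrow> wdeg q w = n)"

definition gen :: "bool \<Rightarrow> 'k::{zero,one} tens" where
  "gen b = (\<lambda>w. if w = [b] then 1 else 0)"

definition tscale :: "'k::times \<Rightarrow> 'k tens \<Rightarrow> 'k tens" where
  "tscale c a = (\<lambda>w. c * a w)"

text \<open>Graded commutator [a,b] = ab - (-1)^(|a||b|) ba, extended bilinearly.\<close>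
definition bracket :: "nat \<Rightarrow> 'k::comm_ring_1 tens \<Rightarrow> 'k tens \<Rightarrow> 'k tens" where
  "bracket q a b = (\<lambda>w. \<Sum>i\<le>length w. a (take i w) * b (drop i w)
      - (-1) ^ (wdeg q (take i w) * wdeg q (drop i w)) * b (take i w) * a (drop i w))"

text \<open>The differential: the degree -1 derivation with d x = y, d y = 0 and
d(ab) = (da) b + (-1)^|a| a (db).\<close>
definition tdiff :: "nat \<Rightarrow> 'k::comm_ring_1 tens \<Rightarrow> 'k tens" where
  "tdiff q a = (\<lambda>w. \<Sum>j<length w. if w ! j then 0
      else (-1) ^ (wdeg q (take j w)) * a (w[j := True]))"

text \<open>The free graded Lie algebra L(x, dx): the Lie subalgebra of T(x,y) generated by x, y.\<close>
inductive_set freeLie :: "nat \<Rightarrow> 'k::comm_ring_1 tens set" for q where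
  gen: "gen b \<in> freeLie q"
| add: "a \<in> freeLie q \<Longrightarrow> b \<in> freeLie q \<Longrightarrow> a + b \<in> freeLie q"
| smult: "a \<in> freeLie q \<Longrightarrow> tscale c a \<in> freeLie q"
| br: "a \<in> freeLie q \<Longrightarrow> b \<in> freeLie q \<Longrightarrow> bracket q a b \<in> freeLie q"

definition sigmak :: "nat \<Rightarrow> nat \<Rightarrow> nat \<Rightarrow> 'k::field tens \<Rightarrow> 'k tens" where
  "sigmak p q k u = tscale (inverse 2)
     (\<Sum>j\<in>{1..<p ^ k}. tscale (of_nat ((p ^ k choose j) div p))
        (bracket q (((bracket q u) ^^ (j - 1)) (tdiff q u))
                   (((bracket q u) ^^ (p ^ k - 1 - j)) (tdiff q u))))"

definition phi :: "nat \<Rightarrow> real" where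
  "phi q = (THE z. z > 0 \<and> z ^ (q + 1) - z - 1 = 0)"

definition is_basis_fam :: "('i \<Rightarrow> 'k::field tens) \<Rightarrow> 'i set \<Rightarrow> 'k tens set \<Rightarrow> bool" where
  "is_basis_fam f S V \<longleftrightarrow> inj_on f S \<and> \<not> module.dependent tscale (f ` S)
      \<and> module.span tscale (f ` S) = V"

end

theory Submission imports Defs begin

interpretation tv: vector_space "tscale :: 'k::field \<Rightarrow> 'k tens \<Rightarrow> 'k tens"
  by unfold_locales (auto simp: tscale_def fun_eq_iff algebra_simps)

lemma sum_fun_app: "(sum f A) w = (\<Sum>a\<in>A. f a w)"
  by (induction A rule: infinite_finite_induct) auto

lemma homog_zero[simp]: "homog q n 0" by (simp add: homog_def)

lemma homog_add: "homog q n a \<Longrightarrow> homog q n b \<Longrightarrow> homog q n (a + (b :: 'k::comm_ring_1 tens))"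
  unfolding homog_def
proof (intro allI impI)
  fix w assume *: "\<forall>w. a w \<noteq> 0 \<longrightarrow> wdeg q w = n" "\<forall>w. b w \<noteq> 0 \<longrightarrow> wdeg q w = n"
    and "(a + b) w \<noteq> 0"
  then have "a w \<noteq> 0 \<or> b w \<noteq> 0" by auto
  then show "wdeg q w = n" using * by blast
qed

lemma homog_tscale: "homog q n a \<Longrightarrow> homog q n (tscale (c::'k::field) a)"
  unfolding homog_def tscale_def by auto

lemma homog_sum: "(\<And>j. j \<in> A \<Longrightarrow> homog q n (f j)) \<Longrightarrow> homog q n (sum f A :: 'k::comm_ring_1 tens)"
proof (induction A rule: infinite_finite_induct)
  case (insert x F)
  have "homog q n (f x + sum f F)" by (rule homog_add) (use insert in auto)
  then show ?case using insert.hyps by (metis sum.insert)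
qed simp_all

lemma wdeg_append: "wdeg q (u @ v) = wdeg q u + wdeg q v"
  by (simp add: wdeg_def)

lemma wdeg_Cons: "wdeg q (b # v) = ldeg q b + wdeg q v"
  by (simp add: wdeg_def)

lemma homog_bracket:
  assumes "homog q m a" "homog q n b" shows "homog q (m + n) (bracket q a b)"
  unfolding homog_def
proof (intro allI impI)
  fix w assume "bracket q a b w \<noteq> 0"
  then obtain i where ne: "a (take i w) * b (drop i w)
      - (-1) ^ (wdeg q (take i w) * wdeg q (drop i w)) * b (take i w) * a (drop i w) \<noteq> 0"
    unfolding bracket_def by (meson sum.neutral)
  have sp: "wdeg q w = wdeg q (take i w) + wdeg q (drop i w)"
    by (metis append_take_drop_id wdeg_append)
  have "(a (take i w) \<noteq> 0 \<and> b (drop i w) \<noteq> 0) \<or> (b (take i w) \<noteq> 0 \<and> a (drop i w) \<noteq> 0)"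
  proof (rule ccontr)
    assume "\<not> ?thesis"
    then have "a (take i w) * b (drop i w) = 0" "b (take i w) * a (drop i w) = 0" by auto
    then show False using ne by (simp add: mult.assoc)
  qed
  then show "wdeg q w = m + n"
  proof
    assume "a (take i w) \<noteq> 0 \<and> b (drop i w) \<noteq> 0"
    then have "wdeg q (take i w) = m" "wdeg q (drop i w) = n"
      using assms unfolding homog_def by blast+
    then show ?thesis using sp by simp
  next
    assume "b (take i w) \<noteq> 0 \<and> a (drop i w) \<noteq> 0"
    then have "wdeg q (take i w) = n" "wdeg q (drop i w) = m"
      using assms unfolding homog_def by blast+
    then show ?thesis using sp by simp
  qed
qed

lemma wdeg_upd: "j < length w \<Longrightarrow> \<not> w ! j \<Longrightarrow> wdeg q (w[j := True]) = wdeg q w + 1"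
proof (induction w arbitrary: j)
  case Nil then show ?case by simp
next
  case (Cons b w) then show ?case
    by (cases j) (auto simp: wdeg_Cons ldeg_def)
qed

lemma homog_tdiff:
  assumes "homog q n (a :: 'k::comm_ring_1 tens)" shows "homog q (n - 1) (tdiff q a)"
  unfolding homog_def
proof (intro allI impI)
  fix w assume ne: "tdiff q a w \<noteq> 0"
  define g where "g j = (if w ! j then 0 else (-1) ^ (wdeg q (take j w)) * a (w[j := True]))" for j
  have td: "tdiff q a w = sum g {..<length w}" unfolding tdiff_def g_def by simp
  have "\<exists>j\<in>{..<length w}. g j \<noteq> 0"
  proof (rule ccontr)
    assume "\<not> ?thesis"
    then have "\<forall>j\<in>{..<length w}. g j = 0" by blast
    then have "sum g {..<length w} = 0" by (rule sum.neutral)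
    then show False using ne td by simp
  qed
  then obtain j where j: "j < length w" "g j \<noteq> 0" by blast
  have nj: "\<not> w ! j"
  proof
    assume "w ! j" then have "g j = 0" unfolding g_def by simp
    then show False using j by simp
  qed
  have "a (w[j := True]) \<noteq> 0"
  proof
    assume "a (w[j := True]) = 0" then have "g j = 0" unfolding g_def by simp
    then show False using j by simp
  qed
  then have "wdeg q (w[j := True]) = n" using assms unfolding homog_def by blast
  moreover have "wdeg q (w[j := True]) = wdeg q w + 1" by (rule wdeg_upd[OF j(1) nj])
  ultimately show "wdeg q w = n - 1" by simp
qed

lemma homog_ad_pow:
  assumes "homog q n u" "homog q m v" shows "homog q (j * n + m) ((bracket q u ^^ j) v)"
proof (induction j)
  case 0 show ?case using assms(2) by simp
next
  case (Suc j)
  have "homog q (n + (j * n + m)) (bracket q u ((bracket q u ^^ j) v))"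
    by (rule homog_bracket[OF assms(1) Suc.IH])
  then show ?case by (simp add: add.assoc)
qed

lemma homog_sigmak:
  assumes "homog q n u" "p \<ge> 2"
  shows "homog q (p ^ k * n - 2) (sigmak p q k u)"
  unfolding sigmak_def
proof (rule homog_tscale, rule homog_sum)
  fix j assume j: "j \<in> {1..<p ^ k}"
  have d: "homog q (n - 1) (tdiff q u)" by (rule homog_tdiff[OF assms(1)])
  have hb: "homog q (((j - 1) * n + (n - 1)) + ((p ^ k - 1 - j) * n + (n - 1)))
     (bracket q ((bracket q u ^^ (j - 1)) (tdiff q u)) ((bracket q u ^^ (p ^ k - 1 - j)) (tdiff q u)))"
    by (intro homog_bracket homog_ad_pow assms d)
  have eq: "((j - 1) * n + (n - 1)) + ((p ^ k - 1 - j) * n + (n - 1)) = p ^ k * n - 2"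
  proof (cases "n = 0")
    case False
    then obtain n' where n: "n = Suc n'" using not0_implies_Suc by blast
    obtain j' where j': "j = Suc j'" using j by (cases j) auto
    obtain r where r: "p ^ k = Suc j' + Suc r" using j j'
      by (metis add_Suc_right atLeastLessThan_iff less_imp_Suc_add)
    show ?thesis unfolding n j' r by (simp add: algebra_simps)
  qed simp
  show "homog q (p ^ k * n - 2) (tscale (of_nat ((p ^ k choose j) div p))
        (bracket q ((bracket q u ^^ (j - 1)) (tdiff q u)) ((bracket q u ^^ (p ^ k - 1 - j)) (tdiff q u))))"
    using hb unfolding eq by (rule homog_tscale)
qed


lemma phi_unique_aux:
  fixes a b :: real assumes q: "q \<ge> 1" and a: "a > 0" "a ^ (q+1) - a - 1 = 0"
    and b: "b > 0" "b ^ (q+1) - b - 1 = 0" shows "a = b"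
proof (rule ccontr)
  assume ne: "a \<noteq> b"
  have gt1: "z > 1" if "z > 0" "z ^ (q+1) - z - 1 = 0" for z :: real
  proof (rule ccontr)
    assume "\<not> z > 1" then have "z \<le> 1" by simp
    then have "z ^ q \<le> 1" using that by (simp add: power_le_one)
    then have "z ^ (q+1) \<le> z" using mult_left_le[of "z^q" z] that by simp
    moreover have "z ^ (q+1) = z + 1" using that by simp
    ultimately show False by linarith
  qed
  have key: False if xy: "0 < x" "x < y" "x ^ (q+1) = x + 1" "y ^ (q+1) = y + 1" for x y :: real
  proof -
    have "x ^ q \<le> y ^ q" using xy by (simp add: power_mono)
    then have "y * x ^ q \<le> y * y ^ q" using xy by (intro mult_left_mono) auto
    then have "y * x ^ q \<le> y ^ (q+1)" by simp
    moreover have "x * (y * x ^ q) = y * (x * x ^ q)" by (simp add: ac_simps)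
    then have "x * (y * x ^ q) = y * (x + 1)" using xy(3) by simp
    ultimately have "x * (y + 1) \<ge> y * (x + 1)" using xy
      by (metis mult_left_mono less_imp_le xy(4))
    then show False using xy by (simp add: algebra_simps)
  qed
  show False
  proof (cases "a < b")
    case True then show False using key[of a b] a b by simp
  next
    case False then have "b < a" using ne by simp
    then show False using key[of b a] a b by simp
  qed
qed

lemma phi_props: assumes q: "q \<ge> 1" shows "phi q > 1" "phi q ^ (q+1) = phi q + 1"
proof -
  have "\<exists>x::real. 1 \<le> x \<and> x \<le> 2 \<and> (\<lambda>z. z ^ (q+1) - z - 1) x = 0"
  proof (rule IVT)
    have "(2::real) ^ (q+1) \<ge> 2 ^ 2" by (rule power_increasing) (use q in auto)
    then show "0 \<le> (\<lambda>z. z ^ (q+1) - z - 1) (2::real)" by simp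
  qed (auto intro!: continuous_intros)
  then obtain x :: real where x: "1 \<le> x" "x ^ (q+1) - x - 1 = 0" by auto
  have th: "phi q > 0 \<and> phi q ^ (q+1) - phi q - 1 = 0"
    unfolding phi_def
    by (rule theI[of _ x]) (use x phi_unique_aux[OF q] in auto)
  then show eq: "phi q ^ (q+1) = phi q + 1" by simp
  show "phi q > 1"
  proof (rule ccontr)
    assume "\<not> phi q > 1" then have "phi q \<le> 1" by simp
    then have "phi q ^ q \<le> 1" using th by (simp add: power_le_one)
    then have "phi q ^ (q+1) \<le> phi q" using th by (simp add: mult_left_le)
    then show False using eq by simp
  qed
qed

definition Wd :: "nat \<Rightarrow> nat \<Rightarrow> bool list set" where
  "Wd q m = {w. wdeg q w = m}"

lemma length_le_wdeg: "q \<ge> 1 \<Longrightarrow> length w \<le> wdeg q w"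
  by (induction w) (auto simp: wdeg_def ldeg_def)

lemma finite_Wd: assumes "q \<ge> 1" shows "finite (Wd q m)"
proof -
  have "Wd q m \<subseteq> {xs. set xs \<subseteq> UNIV \<and> length xs \<le> m}"
    using length_le_wdeg[OF assms] by (auto simp: Wd_def)
  moreover have "finite {xs. set xs \<subseteq> (UNIV::bool set) \<and> length xs \<le> m}"
    by (rule finite_lists_length_le) simp
  ultimately show ?thesis by (rule finite_subset)
qed

lemma card_Wd: assumes q: "q \<ge> 1" shows "real (card (Wd q m)) \<le> phi q ^ m"
proof (induction m rule: less_induct)
  case (less m)
  have ph: "phi q > 1" "phi q ^ (q+1) = phi q + 1" using phi_props[OF q] by auto
  show ?case
  proof (cases "m = 0")
    case True
    have "Wd q m \<subseteq> {[]}" using True length_le_wdeg[OF q] by (auto simp: Wd_def) (metis le_zero_eq length_0_conv)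
    then have "card (Wd q m) \<le> card {[]::bool list}" by (intro card_mono) simp_all
    then have "card (Wd q m) \<le> 1" by simp
    then show ?thesis using True by simp
  next
    case False
    define X1 where "X1 = {w. wdeg q w + (q+1) = m}"
    define X2 where "X2 = {w. wdeg q w + q = m}"
    have sub: "Wd q m \<subseteq> Cons True ` X1 \<union> Cons False ` X2"
    proof
      fix w assume w: "w \<in> Wd q m"
      then obtain b w' where "w = b # w'" using False by (cases w) (auto simp: Wd_def wdeg_def)
      then show "w \<in> Cons True ` X1 \<union> Cons False ` X2" using w
        by (cases b) (auto simp: Wd_def X1_def X2_def wdeg_def ldeg_def)
    qed
    have fX1: "finite X1" "real (card X1) \<le> (if q + 1 \<le> m then phi q ^ (m - (q+1)) else 0)"
    proof -
      have "X1 = (if q + 1 \<le> m then Wd q (m - (q+1)) else {})" by (auto simp: X1_def Wd_def)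
      then show "finite X1" "real (card X1) \<le> (if q + 1 \<le> m then phi q ^ (m - (q+1)) else 0)"
        using less[of "m - (q+1)"] finite_Wd[OF q] False by auto
    qed
    have fX2: "finite X2" "real (card X2) \<le> (if q \<le> m then phi q ^ (m - q) else 0)"
    proof -
      have "X2 = (if q \<le> m then Wd q (m - q) else {})" by (auto simp: X2_def Wd_def)
      then show "finite X2" "real (card X2) \<le> (if q \<le> m then phi q ^ (m - q) else 0)"
        using less[of "m - q"] finite_Wd[OF q] False q by auto
    qed
    have "card (Wd q m) \<le> card (Cons True ` X1 \<union> Cons False ` X2)"
      using sub fX1 fX2 by (intro card_mono) auto
    also have "\<dots> \<le> card (Cons True ` X1) + card (Cons False ` X2)" by (rule card_Un_le)
    also have "\<dots> \<le> card X1 + card X2" by (intro add_mono card_image_le fX1 fX2)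
    finally have "card (Wd q m) \<le> card X1 + card X2" .
    then have c: "real (card (Wd q m)) \<le> real (card X1) + real (card X2)"
      by (simp only: of_nat_add[symmetric] of_nat_le_iff)
    have "real (card X1) + real (card X2) \<le> phi q ^ m"
    proof (cases "q + 1 \<le> m")
      case True
      define r where "r = m - (q+1)"
      have r: "m = r + (q+1)" using True unfolding r_def by simp
      have e1: "m - (q+1) = r" "m - q = Suc r" using r by simp_all
      have "phi q ^ r + phi q ^ Suc r = phi q ^ r * (1 + phi q)" by (simp add: algebra_simps)
      also have "\<dots> = phi q ^ r * phi q ^ (q+1)" using ph by simp
      also have "\<dots> = phi q ^ m" unfolding r by (simp add: power_add)
      finally show ?thesis using fX1 fX2 True unfolding e1 by simp
    next
      case nf: False
      have "(if q \<le> m then phi q ^ (m - q) else 0) \<le> phi q ^ m"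
        using ph by (auto intro!: power_increasing)
      then show ?thesis using fX1 fX2 nf by simp
    qed
    then show ?thesis using c by linarith
  qed
qed

definition delta :: "bool list \<Rightarrow> 'k::{zero,one} tens" where
  "delta u = (\<lambda>w. if w = u then 1 else 0)"

lemma homog_in_span:
  assumes q: "q \<ge> 1" and h: "homog q m (f :: 'k::field tens)"
  shows "f \<in> tv.span (delta ` Wd q m)"
proof -
  have fin: "finite (Wd q m)" by (rule finite_Wd[OF q])
  have eq: "f = (\<Sum>u\<in>Wd q m. tscale (f u) (delta u))"
  proof
    fix w
    have "(\<Sum>u\<in>Wd q m. tscale (f u) (delta u)) w = (\<Sum>u\<in>Wd q m. if u = w then f u else 0)"
      unfolding sum_fun_app tscale_def delta_def by (intro sum.cong) auto
    also have "\<dots> = (if w \<in> Wd q m then f w else 0)" using fin by (simp add: sum.delta')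
    also have "\<dots> = f w" using h unfolding homog_def Wd_def by auto
    finally show "f w = (\<Sum>u\<in>Wd q m. tscale (f u) (delta u)) w" by simp
  qed
  show ?thesis
    by (subst eq) (intro tv.span_sum tv.span_scale tv.span_base imageI)
qed

lemma card_deg_class:
  assumes q: "q \<ge> 1" and ind: "\<not> tv.dependent (xa ` D)" and inj: "inj_on xa D"
    and hom: "\<forall>\<alpha>\<in>D. homog q m (xa \<alpha> :: 'k::field tens)"
  shows "finite D \<and> card D \<le> card (Wd q m)"
proof -
  have "xa ` D \<subseteq> tv.span (delta ` Wd q m)" using homog_in_span hom q by auto
  then have "finite (xa ` D) \<and> card (xa ` D) \<le> card (delta ` Wd q m :: 'k tens set)"
    by (intro tv.independent_span_bound) (auto simp: finite_Wd[OF q] ind intro: finite_imageI)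
  moreover have "card (delta ` Wd q m :: 'k tens set) \<le> card (Wd q m)"
    by (rule card_image_le[OF finite_Wd[OF q]])
  ultimately show ?thesis using inj by (auto simp: card_image dest: finite_imageD)
qed

lemma three_pow: "1 \<le> k \<Longrightarrow> k + 2 \<le> (3::nat) ^ k"
proof (induction k)
  case 0 then show ?case by simp
next
  case (Suc k) then show ?case by (cases "k = 0") auto
qed

theorem mainTheorem14:
  fixes p q N :: nat and H K :: "'k::field tens set"
    and I :: "'i set" and J :: "'j set"
    and xa ya :: "'i \<Rightarrow> 'k tens" and zb wb :: "'j \<Rightarrow> 'k tens"
  assumes "prime p" and "odd p" and "CARD('k) = p" and "q \<ge> 1"
    and "module.subspace tscale H" and "module.subspace tscale K"
    and "H \<subseteq> freeLie q" and "K \<subseteq> freeLie q"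
    and "H \<inter> K = {0}" and "{h + k | h k. h \<in> H \<and> k \<in> K} = freeLie q"
    and "tdiff q ` K \<subseteq> K"
    and "is_basis_fam (case_sum (case_sum xa ya) (case_sum zb wb))
           (Inl ` (Inl ` I \<union> Inr ` I) \<union> Inr ` (Inl ` J \<union> Inr ` J)) K"
    and "\<forall>\<alpha>\<in>I. tdiff q (xa \<alpha>) = ya \<alpha> \<and> (\<exists>n. even n \<and> homog q n (xa \<alpha>))
                \<and> (\<exists>n. homog q n (ya \<alpha>))"
    and "\<forall>\<beta>\<in>J. tdiff q (zb \<beta>) = wb \<beta> \<and> (\<exists>n. odd n \<and> homog q n (zb \<beta>))
                \<and> (\<exists>n. homog q n (wb \<beta>))"
    and "N > 0"
  shows "\<forall>B. B \<subseteq> {v \<in> module.span tscale {sigmak p q k (xa \<alpha>) | \<alpha> k. \<alpha> \<in> I \<and> k \<ge> 1}.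
                      homog q N v}
             \<and> \<not> module.dependent tscale B
         \<longrightarrow> finite B \<and> real (card B) \<le> (2 * (real q + 2) * phi q powr (2 / real p))
                                         * real N * phi q powr (real N / real p)"
proof (intro allI impI)
  fix B assume hB: "B \<subseteq> {v \<in> module.span tscale {sigmak p q k (xa \<alpha>) | \<alpha> k. \<alpha> \<in> I \<and> k \<ge> 1}.
                      homog q N v} \<and> \<not> module.dependent tscale B"
  have q: "q \<ge> 1" by fact
  have N: "N > 0" by fact
  have p2: "p \<ge> 2" using assms(1) prime_ge_2_nat by blast
  have p3: "p \<ge> 3"
  proof -
    have "p \<noteq> 2" using assms(2) by auto
    then show ?thesis using p2 by simp
  qed
  have ph: "phi q > 1" using phi_props[OF q] by simp
  define nd where "nd \<alpha> = (SOME n. even n \<and> homog q n (xa \<alpha>))" for \<alpha>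
  have hnd: "homog q (nd \<alpha>) (xa \<alpha>)" if "\<alpha> \<in> I" for \<alpha>
  proof -
    have "\<exists>n. even n \<and> homog q n (xa \<alpha>)" using assms(13) that by blast
    from someI_ex[OF this] show ?thesis unfolding nd_def by blast
  qed
  define F where "F = case_sum (case_sum xa ya) (case_sum zb wb)"
  define U where "U = (Inl ` (Inl ` I \<union> Inr ` I) \<union> Inr ` (Inl ` J \<union> Inr ` J))"
  have injF: "inj_on F U" and indF: "\<not> tv.dependent (F ` U)"
    using assms(12) unfolding is_basis_fam_def F_def U_def by auto
  have sub: "xa ` I \<subseteq> F ` U"
  proof
    fix v assume "v \<in> xa ` I"
    then obtain \<alpha> where "\<alpha> \<in> I" "v = xa \<alpha>" by auto
    then show "v \<in> F ` U" unfolding F_def U_def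
      by (intro image_eqI[of _ _ "Inl (Inl \<alpha>)"]) auto
  qed
  have indI: "\<not> tv.dependent (xa ` I)" using tv.independent_mono[OF indF sub] .
  have injI: "inj_on xa I"
  proof (rule inj_onI)
    fix \<alpha> \<beta> assume "\<alpha> \<in> I" "\<beta> \<in> I" "xa \<alpha> = xa \<beta>"
    then have "F (Inl (Inl \<alpha>)) = F (Inl (Inl \<beta>))" "Inl (Inl \<alpha>) \<in> U" "Inl (Inl \<beta>) \<in> U"
      unfolding F_def U_def by auto
    then have "(Inl (Inl \<alpha>) :: ('i + 'i) + ('j + 'j)) = Inl (Inl \<beta>)" using injF inj_onD by metis
    then show "\<alpha> = \<beta>" by simp
  qed
  define Sg where "Sg = {sigmak p q k (xa \<alpha>) | \<alpha> k. \<alpha> \<in> I \<and> k \<ge> 1}"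
  define S where "S = {sigmak p q k (xa \<alpha>) | \<alpha> k. \<alpha> \<in> I \<and> k \<ge> 1 \<and> p ^ k * nd \<alpha> = N + 2}"
  define A where "A k = {\<alpha> \<in> I. p ^ k * nd \<alpha> = N + 2}" for k
  define P where "P = (\<Union>k\<in>{1..N}. (\<lambda>\<alpha>. (\<alpha>, k)) ` A k)"
  have SP: "S \<subseteq> (\<lambda>(\<alpha>, k). sigmak p q k (xa \<alpha>)) ` P"
  proof
    fix s assume "s \<in> S"
    then obtain \<alpha> k where s: "s = sigmak p q k (xa \<alpha>)" "\<alpha> \<in> I" "k \<ge> 1" "p ^ k * nd \<alpha> = N + 2"
      unfolding S_def by blast
    have "nd \<alpha> \<noteq> 0"
    proof
      assume "nd \<alpha> = 0" with s(4) show False by simp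
    qed
    then have "p ^ k \<le> N + 2" using s(4) by (metis le_add2 mult.commute mult_le_mono1 not0_implies_Suc mult_Suc add.commute le_trans order_refl)
    moreover have "(3::nat) ^ k \<le> p ^ k" using p3 by (simp add: power_mono)
    moreover have "k + 2 \<le> 3 ^ k" using three_pow s(3) .
    ultimately have "k \<le> N" by linarith
    then have "(\<alpha>, k) \<in> P" unfolding P_def A_def using s by auto
    then show "s \<in> (\<lambda>(\<alpha>, k). sigmak p q k (xa \<alpha>)) ` P" using s(1) by force
  qed
  have Ak: "finite (A k) \<and> real (card (A k)) \<le> phi q powr (real (N + 2) / real p)"
    if k: "k \<ge> 1" for k
  proof -
    define m where "m = (N + 2) div p ^ k"
    have pk: "p ^ k > 0" using p2 by simp
    have Am: "\<forall>\<alpha>\<in>A k. homog q m (xa \<alpha>)"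
    proof
      fix \<alpha> assume "\<alpha> \<in> A k"
      then have "\<alpha> \<in> I" "p ^ k * nd \<alpha> = N + 2" unfolding A_def by auto
      then have "nd \<alpha> = m" unfolding m_def using pk by (metis nonzero_mult_div_cancel_left less_numeral_extra(3))
      then show "homog q m (xa \<alpha>)" using hnd \<open>\<alpha> \<in> I\<close> by metis
    qed
    have AI: "A k \<subseteq> I" unfolding A_def by auto
    have c1: "finite (A k) \<and> card (A k) \<le> card (Wd q m)"
      by (rule card_deg_class[OF q _ inj_on_subset[OF injI AI] Am])
         (rule tv.independent_mono[OF indI], use AI in auto)
    have c2: "real (card (Wd q m)) \<le> phi q ^ m" by (rule card_Wd[OF q])
    have c3: "phi q ^ m = phi q powr (real m)" using ph by (simp add: powr_realpow)
    have "m \<le> (N + 2) div p" unfolding m_def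
      by (rule div_le_mono2) (use p2 k self_le_power[of p k] in auto)
    moreover have "real ((N + 2) div p) \<le> real (N + 2) / real p"
    proof -
      have "(N + 2) div p * p \<le> N + 2" by (rule div_times_less_eq_dividend)
      then have "real ((N + 2) div p) * real p \<le> real (N + 2)" by (metis of_nat_le_iff of_nat_mult)
      then show ?thesis using p2 by (simp add: field_simps)
    qed
    ultimately have "real m \<le> real (N + 2) / real p" by linarith
    then have "phi q powr (real m) \<le> phi q powr (real (N + 2) / real p)"
      using ph by (intro powr_mono) auto
    then show ?thesis using c1 c2 c3 by linarith
  qed
  have finP: "finite P" unfolding P_def using Ak by auto
  have "card P \<le> (\<Sum>k\<in>{1..N}. card ((\<lambda>\<alpha>. (\<alpha>, k)) ` A k))"
    unfolding P_def by (rule card_UN_le) simp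
  also have "\<dots> \<le> (\<Sum>k\<in>{1..N}. card (A k))" by (intro sum_mono card_image_le) (use Ak in auto)
  finally have "real (card P) \<le> (\<Sum>k\<in>{1..N}. real (card (A k)))" by (metis of_nat_le_iff of_nat_sum)
  also have "\<dots> \<le> (\<Sum>k\<in>{1..N}. phi q powr (real (N + 2) / real p))"
    by (intro sum_mono) (use Ak in auto)
  also have "\<dots> = real N * phi q powr (real (N + 2) / real p)" by simp
  finally have cP: "real (card P) \<le> real N * phi q powr (real (N + 2) / real p)" .
  have finS: "finite S" using SP finP by (meson finite_imageI finite_subset)
  have "card S \<le> card ((\<lambda>(\<alpha>, k). sigmak p q k (xa \<alpha>)) ` P)" using SP finP by (intro card_mono) auto
  also have "\<dots> \<le> card P" using finP by (rule card_image_le)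
  finally have cS: "card S \<le> card P" .
  define pr where "pr v = (\<lambda>w. if wdeg q w = N then v w else (0::'k))" for v :: "'k tens"
  have pr_gen: "pr s \<in> tv.span S" if "s \<in> Sg" for s
  proof -
    obtain \<alpha> k where s: "s = sigmak p q k (xa \<alpha>)" "\<alpha> \<in> I" "k \<ge> 1"
      using \<open>s \<in> Sg\<close> unfolding Sg_def by blast
    have h: "homog q (p ^ k * nd \<alpha> - 2) s" unfolding s(1) by (rule homog_sigmak[OF hnd[OF s(2)] p2])
    show ?thesis
    proof (cases "p ^ k * nd \<alpha> - 2 = N")
      case True
      then have "p ^ k * nd \<alpha> = N + 2" using N by linarith
      then have "s \<in> S" unfolding S_def using s by blast
      moreover have "pr s = s"
      proof
        fix w show "pr s w = s w" using h True unfolding pr_def homog_def by auto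
      qed
      ultimately show ?thesis by (simp add: tv.span_base)
    next
      case False
      have "pr s = 0"
      proof
        fix w show "pr s w = 0 w" using h False unfolding pr_def homog_def by auto
      qed
      then show ?thesis by (simp add: tv.span_zero)
    qed
  qed
  have pr_span: "pr v \<in> tv.span S" if "v \<in> tv.span Sg" for v
    using that
  proof (induction rule: tv.span_induct_alt)
    case base
    have "pr 0 = 0" unfolding pr_def by auto
    then show ?case by (metis tv.span_zero)
  next
    case (step c x y)
    have eq: "pr (tscale c x + y) = tscale c (pr x) + pr y"
      unfolding pr_def tscale_def by auto
    show ?case unfolding eq by (intro tv.span_add tv.span_scale pr_gen step)
  qed
  have BS: "B \<subseteq> tv.span S"
  proof
    fix v assume "v \<in> B"
    then have v: "v \<in> tv.span Sg" "homog q N v" using hB unfolding Sg_def by auto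
    have "pr v = v"
    proof
      fix w show "pr v w = v w" using v(2) unfolding pr_def homog_def by auto
    qed
    then show "v \<in> tv.span S" using pr_span[OF v(1)] by simp
  qed
  have fB: "finite B \<and> card B \<le> card S"
    using tv.independent_span_bound[OF finS _ BS] hB by blast
  have "real (N + 2) / real p = real N / real p + 2 / real p" by (simp add: add_divide_distrib)
  then have "phi q powr (real (N + 2) / real p) = phi q powr (real N / real p) * phi q powr (2 / real p)"
    by (simp add: powr_add)
  then have "real (card B) \<le> real N * (phi q powr (real N / real p) * phi q powr (2 / real p))"
    using fB cS cP by (metis of_nat_le_iff order_trans)
  also have "\<dots> \<le> (2 * (real q + 2)) * (real N * (phi q powr (real N / real p) * phi q powr (2 / real p)))"
    using mult_right_mono[of 1 "2 * (real q + 2)" "real N * (phi q powr (real N / real p) * phi q powr (2 / real p))"]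
    by simp
  also have "\<dots> = (2 * (real q + 2) * phi q powr (2 / real p)) * real N * phi q powr (real N / real p)"
    by (simp add: ac_simps)
  finally show "finite B \<and> real (card B) \<le> (2 * (real q + 2) * phi q powr (2 / real p))
                                         * real N * phi q powr (real N / real p)" using fB by simp
qed
end
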